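(* For every positive integer $n$, let $S_n$ be the tournament on vertex set $\{v_1,\ldots,v_n\}$ obtained as follows: start from the acyclic tournament in which, for all $1\le j<i\le n$, the edge between $v_i$ and $v_j$ is directed from $v_i$ to $v_j$ (so the out-neighbours of $v_i$ are $v_1,\ldots,v_{i-1}$), and then reverse the edges of the Hamiltonian path $v_n,v_{n-1},\ldots,v_1$ (i.e. for each $1\le i\le n-1$ the edge $v_{i+1}\to v_i$ is replaced by $v_i\to v_{i+1}$). Then $$P(S_n;x)=\sum_{i=1}^n\binom{i}{n-i}x(x-1)^{i-1}.$$
   Context: For a positive integer $k$, a proper $k$-coloring of a digraph $D$ is a map $c:V(D)\to\{1,\ldots,k\}$ such that each color class induces a subdigraph with no directed cycle. The number of proper $k$-colorings of $D$ is a polynomial in $k$, denoted $P(D;k)$ (the dichromatic polynomial). $\binom{i}{m}=0$ when $m>i$. *)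

theory Defs
  imports Main "HOL-Library.FuncSet"
begin

definition induced_arcs :: "('v \<times> 'v) set \<Rightarrow> 'v set \<Rightarrow> ('v \<times> 'v) set" where
  "induced_arcs A U = A \<inter> (U \<times> U)"

definition proper_coloring :: "'v set \<Rightarrow> ('v \<times> 'v) set \<Rightarrow> nat \<Rightarrow> ('v \<Rightarrow> nat) \<Rightarrow> bool" where
  "proper_coloring V A k c \<longleftrightarrow>
     c \<in> V \<rightarrow> {1..k} \<and>
     (\<forall>a \<in> {1..k}. acyclic (induced_arcs A {v \<in> V. c v = a}))"

text \<open>Number of proper k-colourings (maps are taken extensional outside V,
  so that they are counted as maps on V).\<close>
definition num_colorings :: "'v set \<Rightarrow> ('v \<times> 'v) set \<Rightarrow> nat \<Rightarrow> nat" where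
  "num_colorings V A k = card {c \<in> V \<rightarrow>\<^sub>E {1..k}. proper_coloring V A k c}"

text \<open>The tournament S_n on vertices 1..n (vertex i stands for v_i):
  arcs i -> j for j < i, except that the path arcs (j+1) -> j are reversed to j -> (j+1).\<close>
definition S_arcs :: "nat \<Rightarrow> (nat \<times> nat) set" where
  "S_arcs n = {(i, j). i \<in> {1..n} \<and> j \<in> {1..n} \<and>
                 ((j < i \<and> i \<noteq> j + 1) \<or> j = i + 1)}"

end

theory Submission imports Defs begin

fun good :: "nat list \<Rightarrow> bool" where
  "good (a#b#c#xs) = (\<not>(a=b \<and> b=c) \<and> good (b#c#xs))"
| "good _ = True"

lemma good_Cons: "good (a#xs) \<Longrightarrow> good xs"
  by (induction xs rule: good.induct) auto

lemma good_neq: "a \<noteq> b \<Longrightarrow> good (a#b#zs) = good (b#zs)"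
  by (cases zs) auto

lemma good_nth: "good xs \<longleftrightarrow> (\<forall>i. i+2 < length xs \<longrightarrow> \<not>(xs!i = xs!(i+1) \<and> xs!(i+1) = xs!(i+2)))"
proof (induction xs rule: good.induct)
  case (1 a b c xs)
  show ?case
  proof
    assume g: "good (a#b#c#xs)"
    show "\<forall>i. i+2 < length (a#b#c#xs) \<longrightarrow> \<not>((a#b#c#xs)!i = (a#b#c#xs)!(i+1) \<and> (a#b#c#xs)!(i+1) = (a#b#c#xs)!(i+2))"
    proof (intro allI impI)
      fix i assume "i+2 < length (a#b#c#xs)"
      show "\<not>((a#b#c#xs)!i = (a#b#c#xs)!(i+1) \<and> (a#b#c#xs)!(i+1) = (a#b#c#xs)!(i+2))"
      proof (cases i)
        case 0 then show ?thesis using g by simp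
      next
        case (Suc j)
        have "j+2 < length (b#c#xs)" using \<open>i+2 < _\<close> Suc by simp
        then show ?thesis using 1 g Suc by auto
      qed
    qed
  next
    assume h: "\<forall>i. i+2 < length (a#b#c#xs) \<longrightarrow> \<not>((a#b#c#xs)!i = (a#b#c#xs)!(i+1) \<and> (a#b#c#xs)!(i+1) = (a#b#c#xs)!(i+2))"
    have "\<not>(a=b \<and> b=c)" using h[rule_format, of 0] by simp
    moreover have "good (b#c#xs)"
      unfolding 1
    proof (intro allI impI)
      fix i assume "i+2 < length (b#c#xs)"
      then show "\<not>((b#c#xs)!i = (b#c#xs)!(i+1) \<and> (b#c#xs)!(i+1) = (b#c#xs)!(i+2))"
        using h[rule_format, of "Suc i"] by simp
    qed
    ultimately show "good (a#b#c#xs)" by simp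
  qed
qed (auto simp: less_Suc_eq)

lemma acyc_rank:
  assumes "\<And>x y. (x,y) \<in> R \<Longrightarrow> f y < (f x :: nat)"
  shows "acyclic R"
proof -
  have "(x,y) \<in> R\<^sup>+ \<Longrightarrow> f y < f x" for x y
    by (induction rule: trancl_induct) (auto dest: assms)
  then show ?thesis unfolding acyclic_def by blast
qed

lemma acyc_iff:
  "acyclic (induced_arcs (S_arcs n) U) \<longleftrightarrow> (\<forall>i. \<not>(i\<in>U \<and> i+1\<in>U \<and> i+2\<in>U \<and> 1 \<le> i \<and> i+2 \<le> n))"
proof
  assume a: "acyclic (induced_arcs (S_arcs n) U)"
  show "\<forall>i. \<not>(i\<in>U \<and> i+1\<in>U \<and> i+2\<in>U \<and> 1 \<le> i \<and> i+2 \<le> n)"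
  proof (intro allI notI)
    fix i assume h: "i\<in>U \<and> i+1\<in>U \<and> i+2\<in>U \<and> 1 \<le> i \<and> i+2 \<le> n"
    have "(i,i+1) \<in> induced_arcs (S_arcs n) U" "(i+1,i+2) \<in> induced_arcs (S_arcs n) U"
         "(i+2,i) \<in> induced_arcs (S_arcs n) U"
      using h by (auto simp: induced_arcs_def S_arcs_def)
    then have "(i,i) \<in> (induced_arcs (S_arcs n) U)\<^sup>+"
      by (meson trancl.simps)
    with a show False unfolding acyclic_def by blast
  qed
next
  assume h: "\<forall>i. \<not>(i\<in>U \<and> i+1\<in>U \<and> i+2\<in>U \<and> 1 \<le> i \<and> i+2 \<le> n)"
  show "acyclic (induced_arcs (S_arcs n) U)"
  proof (rule acyc_rank[where f="\<lambda>x. 2*x + (if x+1 \<in> U \<and> x+1 \<le> n then 3 else 0)"])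
    fix x y assume xy: "(x,y) \<in> induced_arcs (S_arcs n) U"
    then have xy': "x \<in> U" "y \<in> U" "x \<in> {1..n}" "y \<in> {1..n}" "(y < x \<and> x \<noteq> y + 1) \<or> y = x + 1"
      by (auto simp: induced_arcs_def S_arcs_def)
    show "2*y + (if y+1 \<in> U \<and> y+1 \<le> n then 3 else 0) < 2*x + (if x+1 \<in> U \<and> x+1 \<le> n then 3 else 0)"
    proof (cases "y = x+1")
      case True
      have x1: "1 \<le> x" "x+1 \<in> U" "x \<in> U" "x+1 \<le> n" using xy' True by auto
      have "\<not>(x\<in>U \<and> x+1\<in>U \<and> x+2\<in>U \<and> 1 \<le> x \<and> x+2 \<le> n)" using h by blast
      then have "\<not>(x+2 \<in> U \<and> x+2 \<le> n)" using x1 by blast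
      then have "\<not>(y+1 \<in> U \<and> y+1 \<le> n)" using True by (simp add: numeral_2_eq_2)
      then show ?thesis using True x1 by simp
    next
      case False
      then have "y + 2 \<le> x" using xy'(5) by linarith
      then show ?thesis by auto
    qed
  qed
qed

definition L :: "nat \<Rightarrow> nat \<Rightarrow> nat list set" where
  "L k n = {xs. length xs = n \<and> set xs \<subseteq> {1..k} \<and> good xs}"

lemma finite_L: "finite (L k n)"
proof -
  have "L k n \<subseteq> {xs. set xs \<subseteq> {1..k} \<and> length xs = n}" by (auto simp: L_def)
  then show ?thesis using finite_lists_length_eq[of "{1..k}" n] finite_subset by blast
qed

lemma card_L_small: "n \<le> 2 \<Longrightarrow> card (L k n) = k ^ n"
proof -
  assume n: "n \<le> 2"
  have "good xs" if "length xs \<le> 2" for xs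
    using that by (cases xs rule: good.cases) auto
  then have "L k n = {xs. set xs \<subseteq> {1..k} \<and> length xs = n}" using n by (auto simp: L_def)
  then show ?thesis by (simp add: card_lists_length_eq)
qed

lemma card_L_rec:
  assumes k: "k \<ge> 1"
  shows "card (L k (n+3)) = (k-1) * (card (L k (n+2)) + card (L k (n+1)))"
proof -
  define A where "A = (SIGMA ys:L k (n+2). {1..k} - {hd ys})"
  define B where "B = (SIGMA ys:L k (n+1). {1..k} - {hd ys})"
  define P where "P = (\<lambda>(ys,a). a#ys) ` A"
  define Q where "Q = (\<lambda>(ys,a). a#a#ys) ` B"
  have hdin: "hd ys \<in> {1..k}" if "ys \<in> L k (Suc m)" for ys m
  proof -
    from that obtain b zs where "ys = b#zs" "set ys \<subseteq> {1..k}" unfolding L_def by (cases ys) auto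
    then show ?thesis by auto
  qed
  have cA: "card A = (k-1) * card (L k (n+2))"
  proof -
    have "card A = (\<Sum>ys\<in>L k (n+2). card ({1..k} - {hd ys}))"
      unfolding A_def by (rule card_SigmaI) (auto simp: finite_L)
    also have "\<dots> = (\<Sum>ys\<in>L k (n+2). k - 1)"
      by (rule sum.cong) (auto simp: hdin[of _ "n+1", simplified])
    finally show ?thesis by simp
  qed
  have cB: "card B = (k-1) * card (L k (n+1))"
  proof -
    have "card B = (\<Sum>ys\<in>L k (n+1). card ({1..k} - {hd ys}))"
      unfolding B_def by (rule card_SigmaI) (auto simp: finite_L)
    also have "\<dots> = (\<Sum>ys\<in>L k (n+1). k - 1)"
      by (rule sum.cong) (auto simp: hdin[of _ "n", simplified])
    finally show ?thesis by simp
  qed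
  have fA: "finite A" unfolding A_def by (auto simp: finite_L)
  have fB: "finite B" unfolding B_def by (auto simp: finite_L)
  have cP: "card P = card A" unfolding P_def by (rule card_image) (auto simp: inj_on_def)
  have cQ: "card Q = card B" unfolding Q_def by (rule card_image) (auto simp: inj_on_def)
  have disj: "P \<inter> Q = {}"
    unfolding P_def Q_def A_def B_def L_def by auto
  have eq: "L k (n+3) = P \<union> Q"
  proof
    show "L k (n+3) \<subseteq> P \<union> Q"
    proof
      fix xs assume xs: "xs \<in> L k (n+3)"
      then obtain a b zs where xz: "xs = a#b#zs" "length zs = n+1"
        unfolding L_def by (cases xs; cases "tl xs") auto
      show "xs \<in> P \<union> Q"
      proof (cases "a = b")
        case False
        have "b#zs \<in> L k (n+2)" using xs xz good_Cons[of a "b#zs"] by (auto simp: L_def)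
        then have "(b#zs, a) \<in> A" using xs xz False by (auto simp: A_def L_def)
        then show ?thesis unfolding P_def using xz by force
      next
        case True
        obtain c ws where zc: "zs = c#ws" using xz by (cases zs) auto
        have g: "good (a#a#c#ws)" using xs xz zc True by (simp add: L_def)
        then have "a \<noteq> c" by simp
        have "good (c#ws)" using g good_Cons by auto
        then have "(zs, a) \<in> B" using xs xz zc \<open>a \<noteq> c\<close> True by (auto simp: B_def L_def)
        then show ?thesis unfolding Q_def using xz True by force
      qed
    qed
  next
    show "P \<union> Q \<subseteq> L k (n+3)"
    proof
      fix xs assume "xs \<in> P \<union> Q"
      then show "xs \<in> L k (n+3)"
      proof
        assume "xs \<in> P"
        then obtain ys a where ya: "xs = a#ys" "(ys,a) \<in> A" unfolding P_def by auto
        then obtain b zs where "ys = b#zs" unfolding A_def L_def by (cases ys) auto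
        then show ?thesis using ya good_neq[of a b zs] by (auto simp: A_def L_def)
      next
        assume "xs \<in> Q"
        then obtain ys a where ya: "xs = a#a#ys" "(ys,a) \<in> B" unfolding Q_def by auto
        then obtain b zs where "ys = b#zs" unfolding B_def L_def by (cases ys) auto
        then show ?thesis using ya good_neq[of a b zs] by (auto simp: B_def L_def)
      qed
    qed
  qed
  have "card (L k (n+3)) = card P + card Q"
    unfolding eq using fA fB disj P_def Q_def by (simp add: card_Un_disjoint)
  also have "\<dots> = (k-1) * card (L k (n+2)) + (k-1) * card (L k (n+1))"
    using cA cB cP cQ by simp
  finally show ?thesis by (simp add: add_mult_distrib2)
qed

definition V :: "int \<Rightarrow> nat \<Rightarrow> int" where
  "V m n = (\<Sum>i\<le>n. int (Suc i choose (n - i)) * m ^ i)"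

lemma V_rec: "V m (n+2) = m * (V m (n+1) + V m n)"
proof -
  have "V m (n+2) = (\<Sum>i\<le>Suc (Suc n). int (Suc i choose (Suc (Suc n) - i)) * m ^ i)"
    by (simp add: V_def)
  also have "\<dots> = (\<Sum>i\<le>Suc n. int (Suc (Suc i) choose (Suc n - i)) * m ^ Suc i)"
    by (subst sum.atMost_Suc_shift) simp
  also have "\<dots> = (\<Sum>i\<le>n. int (Suc (Suc i) choose (Suc n - i)) * m ^ Suc i) + m ^ Suc (Suc n)"
    by simp
  also have "(\<Sum>i\<le>n. int (Suc (Suc i) choose (Suc n - i)) * m ^ Suc i)
     = (\<Sum>i\<le>n. m * (int (Suc i choose (n - i)) * m ^ i) + m * (int (Suc i choose Suc (n - i)) * m ^ i))"
    by (rule sum.cong) (auto simp: Suc_diff_le algebra_simps)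
  also have "\<dots> = m * V m n + m * (\<Sum>i\<le>n. int (Suc i choose Suc (n - i)) * m ^ i)"
    by (simp add: sum.distrib sum_distrib_left V_def)
  finally have 1: "V m (n+2) = m * V m n + m * ((\<Sum>i\<le>n. int (Suc i choose Suc (n - i)) * m ^ i) + m ^ Suc n)"
    by (simp add: algebra_simps)
  have "V m (n+1) = (\<Sum>i\<le>Suc n. int (Suc i choose (Suc n - i)) * m ^ i)" by (simp add: V_def)
  also have "\<dots> = (\<Sum>i\<le>n. int (Suc i choose Suc (n - i)) * m ^ i) + m ^ Suc n"
    by (simp add: Suc_diff_le)
  finally show ?thesis using 1 by (simp add: algebra_simps)
qed

lemma card_L_V: "k \<ge> 1 \<Longrightarrow> int (card (L k (Suc n))) = int k * V (int k - 1) n \<and>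
   int (card (L k (Suc (Suc n)))) = int k * V (int k - 1) (Suc n)"
proof (induction n)
  case 0
  then show ?case by (simp add: card_L_small V_def power2_eq_square)
next
  case (Suc n)
  have "card (L k (n+3)) = (k-1) * (card (L k (n+2)) + card (L k (n+1)))"
    using Suc.prems by (rule card_L_rec)
  then have "int (card (L k (n+3))) = (int k - 1) * (int (card (L k (n+2))) + int (card (L k (n+1))))"
    using Suc.prems by (simp add: of_nat_diff)
  also have "\<dots> = int k * V (int k - 1) (n+2)"
  proof -
    have e: "int (card (L k (n+2))) = int k * V (int k - 1) (n+1)" "int (card (L k (n+1))) = int k * V (int k - 1) n"
      using Suc by simp_all
    show ?thesis unfolding e V_rec[of "int k - 1" n] by (simp add: algebra_simps)
  qed
  finally show ?case using Suc by (simp add: numeral_3_eq_3 numeral_2_eq_2)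
qed

lemma proper_iff:
  assumes c: "c \<in> {1..n} \<rightarrow>\<^sub>E {1..k}"
  shows "proper_coloring {1..n} (S_arcs n) k c \<longleftrightarrow>
    (\<forall>i. 1 \<le> i \<longrightarrow> i+2 \<le> n \<longrightarrow> \<not>(c i = c (i+1) \<and> c (i+1) = c (i+2)))"
proof -
  have cP: "c \<in> {1..n} \<rightarrow> {1..k}" using c by (simp add: PiE_iff Pi_iff)
  have "proper_coloring {1..n} (S_arcs n) k c \<longleftrightarrow>
    (\<forall>a\<in>{1..k}. \<forall>i. \<not>(i\<in>{v \<in> {1..n}. c v = a} \<and> i+1\<in>{v \<in> {1..n}. c v = a} \<and> i+2\<in>{v \<in> {1..n}. c v = a} \<and> 1 \<le> i \<and> i+2 \<le> n))"
    unfolding proper_coloring_def acyc_iff using cP by simp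
  also have "\<dots> \<longleftrightarrow> (\<forall>i. 1 \<le> i \<longrightarrow> i+2 \<le> n \<longrightarrow> \<not>(c i = c (i+1) \<and> c (i+1) = c (i+2)))"
  proof
    assume h: "\<forall>a\<in>{1..k}. \<forall>i. \<not>(i\<in>{v \<in> {1..n}. c v = a} \<and> i+1\<in>{v \<in> {1..n}. c v = a} \<and> i+2\<in>{v \<in> {1..n}. c v = a} \<and> 1 \<le> i \<and> i+2 \<le> n)"
    show "\<forall>i. 1 \<le> i \<longrightarrow> i+2 \<le> n \<longrightarrow> \<not>(c i = c (i+1) \<and> c (i+1) = c (i+2))"
    proof (intro allI impI notI)
      fix i assume i: "1 \<le> i" "i+2 \<le> n" "c i = c (i+1) \<and> c (i+1) = c (i+2)"
      have ci: "c i \<in> {1..k}" using cP i by auto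
      have "\<not>(i\<in>{v \<in> {1..n}. c v = c i} \<and> i+1\<in>{v \<in> {1..n}. c v = c i} \<and> i+2\<in>{v \<in> {1..n}. c v = c i} \<and> 1 \<le> i \<and> i+2 \<le> n)"
        using h ci by blast
      then show False using i by auto
    qed
  next
    assume h: "\<forall>i. 1 \<le> i \<longrightarrow> i+2 \<le> n \<longrightarrow> \<not>(c i = c (i+1) \<and> c (i+1) = c (i+2))"
    then show "\<forall>a\<in>{1..k}. \<forall>i. \<not>(i\<in>{v \<in> {1..n}. c v = a} \<and> i+1\<in>{v \<in> {1..n}. c v = a} \<and> i+2\<in>{v \<in> {1..n}. c v = a} \<and> 1 \<le> i \<and> i+2 \<le> n)"
      by auto
  qed
  finally show ?thesis .
qed

lemma good_map: "good (map c [1..<Suc n]) \<longleftrightarrow>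
    (\<forall>i. 1 \<le> i \<longrightarrow> i+2 \<le> n \<longrightarrow> \<not>(c i = c (i+1) \<and> c (i+1) = c (i+2)))"
proof -
  have "good (map c [1..<Suc n]) \<longleftrightarrow> (\<forall>j. j+2 < n \<longrightarrow> \<not>(c (j+1) = c (j+2) \<and> c (j+2) = c (j+3)))"
    unfolding good_nth by (simp del: upt_Suc add: add.commute numeral_3_eq_3)
  also have "\<dots> \<longleftrightarrow> (\<forall>i. 1 \<le> i \<longrightarrow> i+2 \<le> n \<longrightarrow> \<not>(c i = c (i+1) \<and> c (i+1) = c (i+2)))"
  proof
    assume h: "\<forall>j. j+2 < n \<longrightarrow> \<not>(c (j+1) = c (j+2) \<and> c (j+2) = c (j+3))"
    show "\<forall>i. 1 \<le> i \<longrightarrow> i+2 \<le> n \<longrightarrow> \<not>(c i = c (i+1) \<and> c (i+1) = c (i+2))"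
    proof (intro allI impI)
      fix i assume "1 \<le> i" "i+2 \<le> n"
      then have "i = (i-1)+1" "(i-1)+2 < n" by linarith+
      then show "\<not>(c i = c (i+1) \<and> c (i+1) = c (i+2))" using h[rule_format, of "i-1"] by (simp add: numeral_2_eq_2 numeral_3_eq_3)
    qed
  next
    assume h: "\<forall>i. 1 \<le> i \<longrightarrow> i+2 \<le> n \<longrightarrow> \<not>(c i = c (i+1) \<and> c (i+1) = c (i+2))"
    show "\<forall>j. j+2 < n \<longrightarrow> \<not>(c (j+1) = c (j+2) \<and> c (j+2) = c (j+3))"
    proof (intro allI impI)
      fix j assume "j+2 < n"
      then show "\<not>(c (j+1) = c (j+2) \<and> c (j+2) = c (j+3))" using h[rule_format, of "j+1"] by (simp add: numeral_2_eq_2 numeral_3_eq_3)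
    qed
  qed
  finally show ?thesis .
qed

lemma num_eq_L: "num_colorings {1..n} (S_arcs n) k = card (L k n)"
proof -
  define C where "C = {c \<in> {1..n} \<rightarrow>\<^sub>E {1..k}. proper_coloring {1..n} (S_arcs n) k c}"
  define f where "f = (\<lambda>c::nat\<Rightarrow>nat. map c [1..<Suc n])"
  have inj: "inj_on f C"
  proof
    fix c d assume cd: "c \<in> C" "d \<in> C" "f c = f d"
    show "c = d"
    proof (rule extensionalityI[of _ "{1..n}"])
      show "c \<in> extensional {1..n}" "d \<in> extensional {1..n}" using cd by (auto simp: C_def PiE_def)
      fix x assume x: "x \<in> {1..n}"
      have "map c [1..<Suc n] ! (x-1) = map d [1..<Suc n] ! (x-1)" using cd(3) by (simp only: f_def)
      moreover have "[1..<Suc n]!(x-1) = x" "x - 1 < length [1..<Suc n]" using x by (auto simp del: upt_Suc)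
      ultimately show "c x = d x" by (metis nth_map)
    qed
  qed
  have img: "f ` C = L k n"
  proof
    show "f ` C \<subseteq> L k n"
    proof
      fix xs assume "xs \<in> f ` C"
      then obtain c where c: "c \<in> C" "xs = f c" by auto
      have cE: "c \<in> {1..n} \<rightarrow>\<^sub>E {1..k}" using c by (simp add: C_def)
      have "set xs \<subseteq> {1..k}" using c cE by (auto simp: f_def PiE_iff)
      moreover have "good xs"
      proof -
        have "proper_coloring {1..n} (S_arcs n) k c" using c by (simp add: C_def)
        then have "good (map c [1..<Suc n])" using proper_iff[OF cE] good_map[of c n] by blast
        then show ?thesis using c(2) by (simp only: f_def)
      qed
      ultimately show "xs \<in> L k n" using c by (simp add: L_def f_def)
    qed
  next
    show "L k n \<subseteq> f ` C"
    proof
      fix xs assume xs: "xs \<in> L k n"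
      define c where "c = (\<lambda>i. if i \<in> {1..n} then xs ! (i - 1) else undefined)"
      have fc: "f c = xs"
      proof (rule nth_equalityI)
        have ln: "length xs = n" using xs by (simp add: L_def)
        then show "length (f c) = length xs" by (simp add: f_def)
        fix i assume "i < length (f c)"
        then have i: "i < n" by (simp add: f_def del: upt_Suc)
        then have "[1..<Suc n] ! i = Suc i" by (simp del: upt_Suc)
        then have "f c ! i = c (Suc i)" using i by (simp add: f_def del: upt_Suc)
        also have "\<dots> = xs ! i" using i by (simp add: c_def)
        finally show "f c ! i = xs ! i" .
      qed
      have cE: "c \<in> {1..n} \<rightarrow>\<^sub>E {1..k}"
      proof -
        have "xs ! (i-1) \<in> {1..k}" if "i \<in> {1..n}" for i
        proof -
          have "i - 1 < length xs" using xs that by (auto simp: L_def)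
          then have "xs ! (i-1) \<in> set xs" by (rule nth_mem)
          then show ?thesis using xs by (auto simp: L_def)
        qed
        then show ?thesis by (auto simp: c_def PiE_iff extensional_def)
      qed
      have "good (f c)" using fc xs by (simp add: L_def)
      then have "good (map c [1..<Suc n])" by (simp only: f_def)
      then have "proper_coloring {1..n} (S_arcs n) k c" using proper_iff[OF cE] good_map[of c n] by blast
      then have "c \<in> C" using cE by (simp add: C_def)
      then show "xs \<in> f ` C" using fc by force
    qed
  qed
  have "num_colorings {1..n} (S_arcs n) k = card C" by (simp add: num_colorings_def C_def)
  also have "\<dots> = card (f ` C)" using inj by (simp add: card_image)
  finally show ?thesis using img by simp
qed

theorem mainTheorem9:
  fixes n k :: nat
  assumes "n \<ge> 1" and "k \<ge> 1"
  shows "int (num_colorings {1..n} (S_arcs n) k) =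
           (\<Sum>i = 1..n. int (i choose (n - i)) * int k * (int k - 1) ^ (i - 1))"
proof -
  obtain N where N: "n = Suc N" using assms(1) by (cases n) auto
  have "(\<Sum>i = 1..n. int (i choose (n - i)) * int k * (int k - 1) ^ (i - 1))
      = (\<Sum>i = 0..N. int (Suc i choose (Suc N - Suc i)) * int k * (int k - 1) ^ i)"
  proof -
    have e: "{1..Suc N} = Suc ` {0..N}" by (simp add: image_Suc_atLeastAtMost)
    show ?thesis unfolding N e by (subst sum.reindex) (auto simp: inj_on_def)
  qed
  also have "\<dots> = int k * V (int k - 1) N"
    by (simp add: V_def sum_distrib_left atMost_atLeast0 algebra_simps)
  finally show ?thesis using card_L_V[OF assms(2), of N] num_eq_L N by simp
qed

end
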